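(* For every integer $K\ge 3$ there exist a positive integer $M(K)$ and points $x_1,\dots,x_{M(K)}\in(0,1)$ such that $\{x_i\}_{i=1}^{M(K)}$ is a set of uniqueness for $\mathscr{G}_K$; that is, whenever $F,G\in\mathscr{G}_K$ satisfy $F(x_i)=G(x_i)$ for all $i$, then $F=G$. Moreover $M(K)=O(K^3)$ as $K\to\infty$.
   Context: A Cantor set is specified by an integer scale factor $N\ge 3$ and a digit set $D\subset\{0,1,\dots,N-1\}$ with $2\le |D|\le N-1$; equivalently by its binary digit vector $\vec B=(b_0,\dots,b_{N-1})\in\{0,1\}^N$ with $b_i=1$ iff $i\in D$, and $\|\vec B\|:=\sum_i b_i=|D|$. With $\phi_d(x)=(x+d)/N$ for $d\in D$, the Cantor set $C_{\vec B}\subset[0,1]$ is the unique nonempty compact set with $C_{\vec B}=\bigcup_{d\in D}\phi_d(C_{\vec B})$, and $\mu_{\vec B}$ is the unique Borel probability measure with $\mu_{\vec B}=\frac{1}{\|\vec B\|}\sum_{d\in D}\mu_{\vec B}\circ\phi_d^{-1}$ (it is supported on $C_{\vec B}$). The CDF of the Cantor set is $F_{\vec B}(x)=\mu_{\vec B}([0,x])$ for $x\in[0,1]$. For $K\ge 3$, $\mathscr{G}_K$ denotes the set of all functions $F_{\vec B}$ where $\vec B$ ranges over all such binary digit vectors with scale factor (length) $N\le K$ (different vectors may give the same function). *)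

theory Defs
  imports "HOL-Probability.Probability" "HOL-Library.Landau_Symbols"
begin

text \<open>Admissible data: scale factor N \<ge> 3, digit set D \<subseteq> {0..N-1} with 2 \<le> |D| \<le> N-1.
  (Equivalent to a binary digit vector of length N.)\<close>
definition valid_digits :: "nat \<Rightarrow> nat set \<Rightarrow> bool" where
  "valid_digits N D \<longleftrightarrow> 3 \<le> N \<and> D \<subseteq> {0..<N} \<and> 2 \<le> card D \<and> card D \<le> N - 1"

definition cphi :: "nat \<Rightarrow> nat \<Rightarrow> real \<Rightarrow> real" where
  "cphi N d x = (x + real d) / real N"

definition cantor_measure :: "nat \<Rightarrow> nat set \<Rightarrow> real measure" where
  "cantor_measure N D = (THE \<mu>. sets \<mu> = sets borel \<and> prob_space \<mu> \<and>
     (\<forall>A \<in> sets borel. emeasure \<mu> A =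
        (\<Sum>d\<in>D. emeasure \<mu> (cphi N d -` A)) / ennreal (real (card D))))"

definition cantor_cdf :: "nat \<Rightarrow> nat set \<Rightarrow> real \<Rightarrow> real" where
  "cantor_cdf N D x = measure (cantor_measure N D) {0..x}"

definition cantor_class :: "nat \<Rightarrow> (real \<Rightarrow> real) set" where
  "cantor_class K = {cantor_cdf N D | N D. valid_digits N D \<and> N \<le> K}"

end

theory Submission
  imports Defs
begin


definition fe :: "nat \<Rightarrow> nat set \<Rightarrow> (real \<Rightarrow> real) \<Rightarrow> bool" where
  "fe N D H \<longleftrightarrow> (\<forall>y. H y = (\<Sum>d\<in>D. H (real N * y - real d)) / real (card D))"

definition bc :: "(real \<Rightarrow> real) \<Rightarrow> bool" where
  "bc H \<longleftrightarrow> (\<forall>y\<le>0. H y = 0) \<and> (\<forall>y\<ge>1. H y = 1)"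

definition good :: "nat \<Rightarrow> nat set \<Rightarrow> (real \<Rightarrow> real) \<Rightarrow> bool" where
  "good N D H \<longleftrightarrow> fe N D H \<and> bc H \<and> mono H"

lemma valid_facts:
  assumes "valid_digits N D"
  shows "3 \<le> N" "finite D" "2 \<le> card D" "card D < N" "\<And>d. d \<in> D \<Longrightarrow> d < N"
    "real (card D) \<ge> 2"
  using assms unfolding valid_digits_def
  by (auto intro: finite_subset)

lemma good_range:
  assumes "good N D H" shows "0 \<le> H y" "H y \<le> 1"
proof -
  have m: "mono H" and b: "bc H" using assms by (auto simp: good_def)
  have "H (min y 0) \<le> H y" by (rule monoD[OF m]) simp
  moreover have "H (min y 0) = 0" using b by (simp add: bc_def)
  ultimately show "0 \<le> H y" by simp
  have "H y \<le> H (max y 1)" by (rule monoD[OF m]) simp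
  moreover have "H (max y 1) = 1" using b by (simp add: bc_def)
  ultimately show "H y \<le> 1" by simp
qed

lemma sum_one_nonzero:
  fixes f :: "'a \<Rightarrow> real"
  assumes "finite A" "\<And>a b. a \<in> A \<Longrightarrow> b \<in> A \<Longrightarrow> f a \<noteq> 0 \<Longrightarrow> f b \<noteq> 0 \<Longrightarrow> a = b"
    "\<And>a. a \<in> A \<Longrightarrow> \<bar>f a\<bar> \<le> c" "0 \<le> c"
  shows "\<bar>sum f A\<bar> \<le> c"
proof (cases "\<exists>a\<in>A. f a \<noteq> 0")
  case True
  then obtain a where a: "a \<in> A" "f a \<noteq> 0" by blast
  have "sum f A = f a + sum f (A - {a})" using assms(1) a(1) by (simp add: sum.remove)
  also have "sum f (A - {a}) = 0"
    by (rule sum.neutral) (use assms(2) a in blast)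
  finally show ?thesis using assms(3)[OF a(1)] by simp
next
  case False
  then have "sum f A = 0" by (intro sum.neutral) blast
  then show ?thesis using assms(4) by simp
qed

lemma sum_shift_one:
  fixes g :: "real \<Rightarrow> real"
  assumes "finite D" "\<And>z. z \<le> 0 \<Longrightarrow> g z = 0" "\<And>z. z \<ge> 1 \<Longrightarrow> g z = 0"
    "\<And>z. \<bar>g z\<bar> \<le> c" "0 \<le> c"
  shows "\<bar>\<Sum>d\<in>D. g (x - real d)\<bar> \<le> c"
proof (rule sum_one_nonzero)
  fix a b assume ab: "a \<in> D" "b \<in> D" "g (x - real a) \<noteq> 0" "g (x - real b) \<noteq> 0"
  have "0 < x - real a" "x - real a < 1" "0 < x - real b" "x - real b < 1"
    using ab(3,4) assms(2,3) by (meson not_le)+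
  then have "\<bar>real a - real b\<bar> < 1" by linarith
  then show "a = b" by linarith
qed (use assms in auto)



lemma fe_uniq:
  assumes v: "valid_digits N D" and g1: "good N D H1" and g2: "good N D H2"
  shows "H1 = H2"
proof
  fix y
  let ?r = "real (card D)"
  have r2: "?r \<ge> 2" and fD: "finite D" using valid_facts[OF v] by auto
  define g where "g = (\<lambda>y. H1 y - H2 y)"
  have gz0: "g z = 0" if "z \<le> 0" for z using g1 g2 that by (simp add: g_def good_def bc_def)
  have gz1: "g z = 0" if "z \<ge> 1" for z using g1 g2 that by (simp add: g_def good_def bc_def)
  have geq: "g z = (\<Sum>d\<in>D. g (real N * z - real d)) / ?r" for z
  proof -
    have e1: "H1 z = (\<Sum>d\<in>D. H1 (real N * z - real d)) / ?r" using g1 unfolding good_def fe_def by blast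
    have e2: "H2 z = (\<Sum>d\<in>D. H2 (real N * z - real d)) / ?r" using g2 unfolding good_def fe_def by blast
    show ?thesis unfolding g_def sum_subtractf diff_divide_distrib using e1 e2 by linarith
  qed
  have bound: "\<bar>g z\<bar> \<le> (1 / ?r) ^ k" for k z
  proof (induction k arbitrary: z)
    case 0
    then show ?case using good_range[OF g1, of z] good_range[OF g2, of z] by (simp add: g_def)
  next
    case (Suc k)
    have "\<bar>\<Sum>d\<in>D. g (real N * z - real d)\<bar> \<le> (1 / ?r) ^ k"
      by (rule sum_shift_one) (use fD gz0 gz1 Suc in auto)
    then have "\<bar>(\<Sum>d\<in>D. g (real N * z - real d)) / ?r\<bar> \<le> (1 / ?r) ^ k / ?r"
      using r2 by (simp add: divide_right_mono)
    then show ?case by (subst geq) (simp add: field_simps)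
  qed
  show "H1 y = H2 y"
  proof (rule ccontr)
    assume "H1 y \<noteq> H2 y"
    then have "0 < \<bar>g y\<bar>" by (simp add: g_def)
    moreover have "1 / ?r < 1" using r2 by simp
    ultimately obtain k where "(1 / ?r) ^ k < \<bar>g y\<bar>" using real_arch_pow_inv by blast
    with bound[of y k] show False by simp
  qed
qed

lemma cnt_sum:
  fixes H :: "real \<Rightarrow> real"
  assumes "finite D"
  shows "(\<Sum>e\<in>D. (if e < d then 1 else 0) + (if e = d then c else 0)) =
         real (card {e\<in>D. e < d}) + (if d \<in> D then c else 0)"
proof -
  have 1: "(\<Sum>e\<in>D. (if e < d then 1 else 0::real)) = real (card {e\<in>D. e < d})"
    using assms by (simp add: sum.inter_filter[symmetric])
  have 2: "(\<Sum>e\<in>D. if e = d then c else 0) = (if d \<in> D then c else 0)"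
    using assms by (rule sum.delta)
  show ?thesis by (simp only: sum.distrib 1 2)
qed

lemma cell1:
  assumes v: "valid_digits N D" and g: "good N D H" and d: "d < N" and t: "0 \<le> t" "t \<le> 1"
  shows "H ((real d + t) / real N) =
    (real (card {e\<in>D. e < d}) + (if d \<in> D then H t else 0)) / real (card D)"
proof -
  have N0: "real N > 0" using valid_facts[OF v] by simp
  have fD: "finite D" using valid_facts[OF v] by simp
  have "H ((real d + t) / real N) = (\<Sum>e\<in>D. H (real N * ((real d + t) / real N) - real e)) / real (card D)"
    using g unfolding good_def fe_def by blast
  also have "(\<Sum>e\<in>D. H (real N * ((real d + t) / real N) - real e)) =
       (\<Sum>e\<in>D. (if e < d then 1 else 0) + (if e = d then H t else 0))"
  proof (rule sum.cong)
    fix e assume "e \<in> D"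
    have eq: "real N * ((real d + t) / real N) - real e = real d - real e + t" using N0 by simp
    show "H (real N * ((real d + t) / real N) - real e) = (if e < d then 1 else 0) + (if e = d then H t else 0)"
    proof (cases "e < d")
      case True
      then have "real d - real e \<ge> 1" by linarith
      then show ?thesis using g t True unfolding eq good_def bc_def by auto
    next
      case False
      show ?thesis
      proof (cases "e = d")
        case True
        have "real N * ((real d + t) / real N) - real e = t" using True N0 by simp
        then show ?thesis using True by simp
      next
        case False2: False
        then have "real d - real e \<le> -1" using False by linarith
        then show ?thesis using g t False False2 unfolding eq good_def bc_def by auto
      qed
    qed
  qed simp
  also have "\<dots> = real (card {e\<in>D. e < d}) + (if d \<in> D then H t else 0)"
    by (rule cnt_sum[OF fD])
  finally show ?thesis .
qed



lemma cellk:
  fixes j :: int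
  assumes v: "valid_digits N D" and g: "good N D H"
  shows "\<exists>c. 0 \<le> c \<and> c \<le> (1 / real (card D)) ^ k \<and> (c \<noteq> 0 \<longrightarrow> 0 \<le> j \<and> j < int N ^ k) \<and>
    (\<forall>t. 0 \<le> t \<longrightarrow> t \<le> 1 \<longrightarrow> H ((of_int j + t) / real N ^ k) = H (of_int j / real N ^ k) + c * H t)"
proof (induction k arbitrary: j)
  case 0
  have b0: "H z = 0" if "z \<le> 0" for z using g that by (simp add: good_def bc_def)
  have b1: "H z = 1" if "z \<ge> 1" for z using g that by (simp add: good_def bc_def)
  consider "j \<le> -1" | "j \<ge> 1" | "j = 0" by linarith
  then show ?case
  proof cases
    case 1
    then have j1: "of_int j \<le> (-1::real)" by simp
    have z1: "H (of_int j + t) = 0" if "t \<le> 1" for t by (rule b0) (use that j1 in linarith)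
    have z2: "H (of_int j) = 0" by (rule b0) (use j1 in linarith)
    show ?thesis by (intro exI[of _ 0]) (simp add: z1 z2)
  next
    case 2
    then have j1: "of_int j \<ge> (1::real)" by simp
    have z1: "H (of_int j + t) = 1" if "0 \<le> t" for t by (rule b1) (use that j1 in linarith)
    have z2: "H (of_int j) = 1" by (rule b1) (use j1 in linarith)
    show ?thesis by (intro exI[of _ 0]) (simp add: z1 z2)
  next
    case 3
    then show ?thesis by (intro exI[of _ 1]) (simp add: b0)
  qed
next
  case (Suc k)
  let ?r = "real (card D)"
  let ?M = "real N ^ k"
  let ?P = "\<lambda>j c. 0 \<le> c \<and> c \<le> (1 / ?r) ^ k \<and> (c \<noteq> 0 \<longrightarrow> 0 \<le> j \<and> j < int N ^ k) \<and>
    (\<forall>t. 0 \<le> t \<longrightarrow> t \<le> 1 \<longrightarrow> H ((of_int j + t) / ?M) = H (of_int j / ?M) + c * H t)"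
  have "\<forall>e. \<exists>c. ?P (j - int e * int N ^ k) c" using Suc by blast
  then obtain cf where cf: "\<And>e. ?P (j - int e * int N ^ k) (cf e)" by metis
  have fD: "finite D" and r2: "?r \<ge> 2" and N3: "N \<ge> 3" using valid_facts[OF v] by auto
  have M0: "?M > 0" using N3 by simp
  define c where "c = (\<Sum>e\<in>D. cf e) / ?r"
  have fe1: "H z = (\<Sum>e\<in>D. H (real N * z - real e)) / ?r" for z
    using g unfolding good_def fe_def by blast
  have alg: "real N * ((of_int j + t) / real N ^ Suc k) - real e = (of_int (j - int e * int N ^ k) + t) / ?M" for t e
    using M0 N3 by (simp add: field_simps)
  have main: "H ((of_int j + t) / real N ^ Suc k) = H (of_int j / real N ^ Suc k) + c * H t"
    if t: "0 \<le> t" "t \<le> 1" for t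
  proof -
    have "H ((of_int j + t) / real N ^ Suc k) = (\<Sum>e\<in>D. H ((of_int (j - int e * int N ^ k) + t) / ?M)) / ?r"
      by (subst fe1) (simp only: alg)
    also have "\<dots> = (\<Sum>e\<in>D. H (of_int (j - int e * int N ^ k) / ?M) + cf e * H t) / ?r"
      using cf t by simp
    also have "\<dots> = (\<Sum>e\<in>D. H (of_int (j - int e * int N ^ k) / ?M)) / ?r + c * H t"
      by (simp add: sum.distrib c_def add_divide_distrib sum_distrib_right[symmetric])
    also have "(\<Sum>e\<in>D. H (of_int (j - int e * int N ^ k) / ?M)) / ?r = H (of_int j / real N ^ Suc k)"
      using fe1[of "of_int j / real N ^ Suc k"] alg[of 0] by simp
    finally show ?thesis .
  qed
  have uniq: "a = b" if "a \<in> D" "b \<in> D" "cf a \<noteq> 0" "cf b \<noteq> 0" for a b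
  proof -
    have "0 \<le> j - int a * int N ^ k" "j - int a * int N ^ k < int N ^ k"
         "0 \<le> j - int b * int N ^ k" "j - int b * int N ^ k < int N ^ k"
      using cf[of a] cf[of b] that by auto
    then have "(int a - int b) * int N ^ k < 1 * int N ^ k" "(int b - int a) * int N ^ k < 1 * int N ^ k"
      by (simp_all add: algebra_simps)
    then have "int a - int b < 1" "int b - int a < 1"
      by (meson mult_less_cancel_right not_less zero_le_power of_nat_0_le_iff)+
    then show "a = b" by simp
  qed
  have sumb: "\<bar>\<Sum>e\<in>D. cf e\<bar> \<le> (1 / ?r) ^ k"
    by (rule sum_one_nonzero[OF fD]) (use uniq cf in auto)
  have cnn: "0 \<le> c" unfolding c_def using cf by (simp add: sum_nonneg)
  have cle: "c \<le> (1 / ?r) ^ Suc k"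
  proof -
    have "(\<Sum>e\<in>D. cf e) \<le> (1 / ?r) ^ k" using sumb by simp
    then have "(\<Sum>e\<in>D. cf e) / ?r \<le> (1 / ?r) ^ k / ?r" using r2 by (simp add: divide_right_mono)
    then show ?thesis by (simp add: c_def field_simps)
  qed
  have cpos: "0 \<le> j \<and> j < int N ^ Suc k" if "c \<noteq> 0"
  proof -
    have "(\<Sum>e\<in>D. cf e) \<noteq> 0" using that by (simp add: c_def)
    then obtain e where e: "e \<in> D" "cf e \<noteq> 0" by (meson sum.neutral)
    then have h: "0 \<le> j - int e * int N ^ k" "j - int e * int N ^ k < int N ^ k" using cf[of e] by auto
    have "e + 1 \<le> N" using valid_facts(5)[OF v e(1)] by simp
    then have C: "int (e + 1) * int N ^ k \<le> int N * int N ^ k" by (intro mult_right_mono) auto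
    have A: "0 \<le> int e * int N ^ k" by simp
    have B: "int (e + 1) * int N ^ k = int N ^ k + int e * int N ^ k" by (simp add: algebra_simps)
    have E: "int N ^ Suc k = int N * int N ^ k" by simp
    show ?thesis using h A B C E by linarith
  qed
  show ?case using main cnn cle cpos by blast
qed

lemma incr_bound:
  assumes v: "valid_digits N D" and g: "good N D H" and h: "0 \<le> h" "h \<le> 1 / real N ^ k"
  shows "H (y + h) - H y \<le> (1 / real (card D)) ^ k"
proof -
  let ?M = "real N ^ k"
  let ?q = "(1 / real (card D)) ^ k"
  have N3: "N \<ge> 3" using valid_facts[OF v] by auto
  have M0: "?M > 0" using N3 by simp
  have hM: "h * ?M \<le> 1" using h M0 by (simp add: field_simps)
  define j where "j = \<lfloor>y * ?M\<rfloor>"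
  define t1 where "t1 = y * ?M - of_int j"
  have t1: "0 \<le> t1" "t1 < 1" unfolding t1_def j_def by linarith+
  have y: "y = (of_int j + t1) / ?M" using M0 by (simp add: t1_def)
  obtain c where c: "0 \<le> c" "c \<le> ?q"
    "\<And>t. 0 \<le> t \<Longrightarrow> t \<le> 1 \<Longrightarrow> H ((of_int j + t) / ?M) = H (of_int j / ?M) + c * H t"
    using cellk[OF v g, of k j] by blast
  obtain c' where c': "0 \<le> c'" "c' \<le> ?q"
    "\<And>t. 0 \<le> t \<Longrightarrow> t \<le> 1 \<Longrightarrow> H ((of_int (j + 1) + t) / ?M) = H (of_int (j + 1) / ?M) + c' * H t"
    using cellk[OF v g, of k "j + 1"] by blast
  have Hy: "H y = H (of_int j / ?M) + c * H t1" using c(3)[of t1] t1 y by simp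
  have r0: "0 \<le> H z" "H z \<le> 1" for z using good_range[OF g] by auto
  have mo: "H a \<le> H b" if "a \<le> b" for a b using g that by (simp add: good_def mono_def)
  show ?thesis
  proof (cases "(y + h) * ?M \<le> of_int j + 1")
    case True
    define t2 where "t2 = (y + h) * ?M - of_int j"
    have hM0: "0 \<le> h * ?M" using h M0 by simp
    have dist: "(y + h) * ?M = y * ?M + h * ?M" by (simp add: algebra_simps)
    have t2: "0 \<le> t2" "t2 \<le> 1" using True t1 hM0 dist unfolding t2_def t1_def by linarith+
    have "y + h = (of_int j + t2) / ?M" using M0 by (simp add: t2_def)
    then have "H (y + h) = H (of_int j / ?M) + c * H t2" using c(3) t2 by simp
    then have "H (y + h) - H y = c * (H t2 - H t1)" using Hy by (simp add: algebra_simps)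
    also have "\<dots> \<le> c * 1" using c(1) r0[of t2] r0[of t1] by (intro mult_left_mono) auto
    finally show ?thesis using c(2) by simp
  next
    case False
    define t3 where "t3 = (y + h) * ?M - (of_int j + 1)"
    have t3: "0 \<le> t3" "t3 \<le> t1" using False hM unfolding t3_def t1_def by (auto simp: algebra_simps)
    have "y + h = (of_int (j + 1) + t3) / ?M" using M0 by (simp add: t3_def)
    then have Hyh: "H (y + h) = H (of_int (j + 1) / ?M) + c' * H t3" using c'(3) t3 t1 by simp
    have "H (of_int (j + 1) / ?M) = H ((of_int j + 1) / ?M)" by simp
    also have "\<dots> = H (of_int j / ?M) + c * H 1" using c(3)[of 1] by simp
    also have "H 1 = 1" using g by (simp add: good_def bc_def)
    finally have Hj1: "H (of_int (j + 1) / ?M) = H (of_int j / ?M) + c" by simp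
    have "H (y + h) - H y = c * (1 - H t1) + c' * H t3" using Hyh Hj1 Hy by (simp add: algebra_simps)
    also have "\<dots> \<le> ?q * (1 - H t1) + ?q * H t1"
    proof (rule add_mono)
      show "c * (1 - H t1) \<le> ?q * (1 - H t1)" using c(2) r0[of t1] by (intro mult_right_mono) auto
      have "c' * H t3 \<le> ?q * H t3" using c'(2) r0[of t3] by (intro mult_right_mono) auto
      also have "\<dots> \<le> ?q * H t1" using mo[OF t3(2)] by (intro mult_left_mono) auto
      finally show "c' * H t3 \<le> ?q * H t1" .
    qed
    also have "\<dots> = ?q" by (simp add: algebra_simps)
    finally show ?thesis .
  qed
qed

lemma good_cont_right:
  assumes v: "valid_digits N D" and g: "good N D H"
  shows "continuous (at_right a) H"
proof -
  have mo: "H x \<le> H y" if "x \<le> y" for x y using g that by (simp add: good_def mono_def)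
  show ?thesis
  proof (rule iffD2[OF continuous_at_right_real_increasing], rule mo, assumption, intro allI impI)
    fix e :: real assume e: "0 < e"
    have r2: "real (card D) \<ge> 2" and N3: "N \<ge> 3" using valid_facts[OF v] by auto
    have "1 / real (card D) < 1" using r2 by simp
    then obtain k where k: "(1 / real (card D)) ^ k < e" using real_arch_pow_inv e by blast
    have "0 < 1 / real N ^ k" using N3 by simp
    moreover have "H (a + 1 / real N ^ k) - H a < e"
      using incr_bound[OF v g, of "1 / real N ^ k" k a] k N3 by simp
    ultimately show "\<exists>d>0. H (a + d) - H a < e" by blast
  qed
qed



definition Top :: "nat \<Rightarrow> nat set \<Rightarrow> (real \<Rightarrow> real) \<Rightarrow> real \<Rightarrow> real" where
  "Top N D G y = (\<Sum>d\<in>D. G (real N * y - real d)) / real (card D)"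

definition Fit :: "nat \<Rightarrow> nat set \<Rightarrow> nat \<Rightarrow> real \<Rightarrow> real" where
  "Fit N D n = (Top N D ^^ n) (\<lambda>y. max 0 (min 1 y))"

lemma Fit_Suc: "Fit N D (Suc n) = Top N D (Fit N D n)"
  by (simp add: Fit_def)

lemma bc_mono_range:
  assumes "bc H" "mono H" shows "0 \<le> H y" "H y \<le> 1"
proof -
  have "H (min y 0) \<le> H y" by (rule monoD[OF assms(2)]) simp
  moreover have "H (min y 0) = 0" using assms(1) by (simp add: bc_def)
  ultimately show "0 \<le> H y" by simp
  have "H y \<le> H (max y 1)" by (rule monoD[OF assms(2)]) simp
  moreover have "H (max y 1) = 1" using assms(1) by (simp add: bc_def)
  ultimately show "H y \<le> 1" by simp
qed

lemma Top_bc_mono: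
  assumes v: "valid_digits N D" and b: "bc G" and m: "mono G"
  shows "bc (Top N D G)" "mono (Top N D G)"
proof -
  have fD: "finite D" and r2: "real (card D) \<ge> 2" using valid_facts[OF v] by auto
  have dN: "real d \<le> real N - 1" if "d \<in> D" for d using valid_facts(5)[OF v that] by linarith
  show "bc (Top N D G)" unfolding bc_def
  proof (intro conjI allI impI)
    fix y :: real assume y: "y \<le> 0"
    have "G (real N * y - real d) = 0" for d
    proof -
      have "real N * y \<le> 0" using y by (simp add: mult_nonneg_nonpos)
      then have "real N * y - real d \<le> 0" by simp
      then show ?thesis using b by (simp add: bc_def)
    qed
    then show "Top N D G y = 0" by (simp add: Top_def)
  next
    fix y :: real assume y: "1 \<le> y"
    have "G (real N * y - real d) = 1" if "d \<in> D" for d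
    proof -
      have "real N * 1 \<le> real N * y" using y by (intro mult_left_mono) auto
      then have "real N * y - real d \<ge> 1" using dN[OF that] by linarith
      then show ?thesis using b by (simp add: bc_def)
    qed
    then have "(\<Sum>d\<in>D. G (real N * y - real d)) = real (card D)" by simp
    then show "Top N D G y = 1" using r2 by (simp add: Top_def)
  qed
  show "mono (Top N D G)"
  proof (rule monoI)
    fix x y :: real assume xy: "x \<le> y"
    have "G (real N * x - real d) \<le> G (real N * y - real d)" for d
      by (rule monoD[OF m]) (use xy in \<open>simp add: mult_left_mono\<close>)
    then have "(\<Sum>d\<in>D. G (real N * x - real d)) \<le> (\<Sum>d\<in>D. G (real N * y - real d))"
      by (intro sum_mono)
    then show "Top N D G x \<le> Top N D G y" unfolding Top_def using r2 by (simp add: divide_right_mono)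
  qed
qed

lemma Fit_bc_mono:
  assumes v: "valid_digits N D"
  shows "bc (Fit N D n) \<and> mono (Fit N D n)"
proof (induction n)
  case 0
  show ?case by (auto simp: Fit_def bc_def mono_def)
next
  case (Suc n)
  then show ?case using Top_bc_mono[OF v] by (simp add: Fit_Suc)
qed

lemma Fit_diff:
  assumes v: "valid_digits N D"
  shows "\<bar>Fit N D (Suc n) y - Fit N D n y\<bar> \<le> (1 / real (card D)) ^ n"
proof (induction n arbitrary: y)
  case 0
  show ?case using bc_mono_range[of "Fit N D 0" y] bc_mono_range[of "Fit N D 1" y] Fit_bc_mono[OF v, of 0]
      Fit_bc_mono[OF v, of 1] by simp
next
  case (Suc n)
  let ?r = "real (card D)"
  have fD: "finite D" and r2: "?r \<ge> 2" using valid_facts[OF v] by auto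
  define g where "g = (\<lambda>z. Fit N D (Suc n) z - Fit N D n z)"
  have b1: "bc (Fit N D (Suc n))" and b0: "bc (Fit N D n)" using Fit_bc_mono[OF v] by blast+
  have "\<bar>\<Sum>d\<in>D. g (real N * y - real d)\<bar> \<le> (1 / ?r) ^ n"
    by (rule sum_shift_one[OF fD]) (use b0 b1 Suc in \<open>auto simp: g_def bc_def\<close>)
  then have "\<bar>(\<Sum>d\<in>D. g (real N * y - real d)) / ?r\<bar> \<le> (1 / ?r) ^ n / ?r"
    using r2 by (simp add: divide_right_mono)
  moreover have "Fit N D (Suc (Suc n)) y - Fit N D (Suc n) y = (\<Sum>d\<in>D. g (real N * y - real d)) / ?r"
    unfolding Fit_Suc[of N D "Suc n"] Fit_Suc[of N D n] Top_def g_def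
    by (simp add: sum_subtractf diff_divide_distrib)
  ultimately show ?case by (simp add: field_simps)
qed

lemma exists_good:
  assumes v: "valid_digits N D"
  shows "\<exists>H. good N D H"
proof -
  let ?r = "real (card D)"
  have fD: "finite D" and r2: "?r \<ge> 2" using valid_facts[OF v] by auto
  define H where "H y = Fit N D 0 y + suminf (\<lambda>i. Fit N D (Suc i) y - Fit N D i y)" for y
  have lim: "(\<lambda>n. Fit N D n y) \<longlonglongrightarrow> H y" for y
  proof -
    have "summable (\<lambda>i. Fit N D (Suc i) y - Fit N D i y)"
    proof (rule summable_comparison_test)
      show "\<exists>M. \<forall>n\<ge>M. norm (Fit N D (Suc n) y - Fit N D n y) \<le> (1 / ?r) ^ n"
        using Fit_diff[OF v] by auto
      show "summable (\<lambda>n. (1 / ?r) ^ n)" using r2 by (intro summable_geometric) simp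
    qed
    then have "(\<lambda>n. Fit N D 0 y + (\<Sum>i<n. Fit N D (Suc i) y - Fit N D i y)) \<longlonglongrightarrow> H y"
      unfolding H_def by (intro tendsto_add tendsto_const summable_LIMSEQ)
    moreover have "Fit N D 0 y + (\<Sum>i<n. Fit N D (Suc i) y - Fit N D i y) = Fit N D n y" for n
      using sum_lessThan_telescope[of "\<lambda>i. Fit N D i y" n] by simp
    ultimately show ?thesis by simp
  qed
  have "fe N D H" unfolding fe_def
  proof
    fix y
    have "(\<lambda>n. Fit N D (Suc n) y) \<longlonglongrightarrow> H y" using lim by (rule LIMSEQ_Suc)
    moreover have "(\<lambda>n. Fit N D (Suc n) y) = (\<lambda>n. (\<Sum>d\<in>D. Fit N D n (real N * y - real d)) / ?r)"
      by (simp add: Fit_Suc Top_def)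
    moreover have "(\<lambda>n. (\<Sum>d\<in>D. Fit N D n (real N * y - real d)) / ?r) \<longlonglongrightarrow> (\<Sum>d\<in>D. H (real N * y - real d)) / ?r"
      by (intro tendsto_divide tendsto_const tendsto_sum lim) (use r2 in auto)
    ultimately show "H y = (\<Sum>d\<in>D. H (real N * y - real d)) / ?r"
      using LIMSEQ_unique by metis
  qed
  moreover have "bc H" unfolding bc_def
  proof (intro conjI allI impI)
    fix y :: real assume "y \<le> 0"
    then have "(\<lambda>n. Fit N D n y) = (\<lambda>n. 0)" using Fit_bc_mono[OF v] by (auto simp: bc_def)
    then show "H y = 0" using lim[of y] LIMSEQ_unique tendsto_const by metis
  next
    fix y :: real assume "1 \<le> y"
    then have "(\<lambda>n. Fit N D n y) = (\<lambda>n. 1)" using Fit_bc_mono[OF v] by (auto simp: bc_def)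
    then show "H y = 1" using lim[of y] LIMSEQ_unique tendsto_const by metis
  qed
  moreover have "mono H"
  proof (rule monoI)
    fix x y :: real assume "x \<le> y"
    then have "\<forall>n. Fit N D n x \<le> Fit N D n y" using Fit_bc_mono[OF v] by (auto simp: mono_def)
    then show "H x \<le> H y" using LIMSEQ_le[OF lim[of x] lim[of y]] by auto
  qed
  ultimately show ?thesis unfolding good_def by blast
qed



definition cnt :: "nat set \<Rightarrow> nat \<Rightarrow> real" where
  "cnt D d = real (card {x\<in>D. x < d})"

lemma cnt_Suc:
  assumes "finite D" shows "cnt D (Suc e) = cnt D e + (if e \<in> D then 1 else 0)"
proof -
  have "{x\<in>D. x < Suc e} = {x\<in>D. x < e} \<union> (if e \<in> D then {e} else {})" by (auto simp: less_Suc_eq)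
  moreover have "finite {x\<in>D. x < e}" using assms by simp
  ultimately show ?thesis unfolding cnt_def by (auto simp: card_insert_if)
qed

lemma grid_val:
  assumes v: "valid_digits N D" and g: "good N D H" and e: "e \<le> N"
  shows "H (real e / real N) = cnt D e / real (card D)"
proof (cases "e < N")
  case True
  have "H ((real e + 0) / real N) = (cnt D e + (if e \<in> D then H 0 else 0)) / real (card D)"
    using cell1[OF v g True, of 0] unfolding cnt_def by simp
  moreover have "H 0 = 0" using g by (simp add: good_def bc_def)
  ultimately show ?thesis by simp
next
  case False
  then have eN: "e = N" using e by simp
  have "{x\<in>D. x < N} = D" using valid_facts(5)[OF v] by auto
  moreover have "H 1 = 1" using g by (simp add: good_def bc_def)
  moreover have "card D \<noteq> 0" using valid_facts(3)[OF v] by linarith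
  ultimately show ?thesis using eN valid_facts[OF v] by (simp add: cnt_def)
qed

lemma Lval:
  assumes v: "valid_digits N D" and v2: "valid_digits M E" and g: "good N D H"
    and ag: "\<And>e. e \<le> M \<Longrightarrow> H (real e / real M) = cnt E e / real (card E)"
    and d: "d < N" and e: "e \<le> M"
  shows "H (real (d * M + e) / real (N * M)) =
    (cnt D d + (if d \<in> D then cnt E e / real (card E) else 0)) / real (card D)"
proof -
  have M0: "real M > 0" and N0: "real N > 0" using valid_facts[OF v2] valid_facts[OF v] by auto
  have eq: "real (d * M + e) / real (N * M) = (real d + real e / real M) / real N"
    using M0 N0 by (simp add: field_simps)
  have t: "0 \<le> real e / real M" "real e / real M \<le> 1" using e M0 by (auto simp: field_simps)
  show ?thesis unfolding eq cell1[OF v g d t] ag[OF e] cnt_def by simp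
qed

lemma divmod_lin:
  fixes M d e :: nat
  assumes "e < M"
  shows "(M * d + e) div M = d" "(M * d + e) mod M = e"
  using assms by simp_all

lemma sum_comm:
  fixes f :: "nat \<Rightarrow> real"
  assumes fD: "finite D" and fE: "finite E" and dN: "\<And>d. d \<in> D \<Longrightarrow> d < N"
    and eM: "\<And>e. e \<in> E \<Longrightarrow> e < M"
    and S: "\<And>k. k < N * M \<Longrightarrow> (k div M \<in> D \<and> k mod M \<in> E) \<longleftrightarrow> (k div N \<in> E \<and> k mod N \<in> D)"
  shows "(\<Sum>d\<in>D. \<Sum>e\<in>E. f (M * d + e)) = (\<Sum>e\<in>E. \<Sum>d\<in>D. f (N * e + d))"
proof -
  let ?S = "{k. k < N * M \<and> k div M \<in> D \<and> k mod M \<in> E}"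
  let ?S' = "{k. k < N * M \<and> k div N \<in> E \<and> k mod N \<in> D}"
  have SS: "?S = ?S'" using S by blast
  let ?h = "\<lambda>(d, e). M * d + e"
  let ?h' = "\<lambda>(e, d). N * e + d"
  have inj1: "inj_on ?h (D \<times> E)"
  proof (rule inj_onI, clarify)
    fix d e d' e' assume a: "d \<in> D" "e \<in> E" "d' \<in> D" "e' \<in> E" "M * d + e = M * d' + e'"
    have "d = d'" using divmod_lin[OF eM[OF a(2)], of d] divmod_lin[OF eM[OF a(4)], of d'] a(5) by simp
    moreover have "e = e'" using divmod_lin[OF eM[OF a(2)], of d] divmod_lin[OF eM[OF a(4)], of d'] a(5) by simp
    ultimately show "d = d' \<and> e = e'" by simp
  qed
  have inj2: "inj_on ?h' (E \<times> D)"
  proof (rule inj_onI, clarify)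
    fix d e d' e' assume a: "e \<in> E" "d \<in> D" "e' \<in> E" "d' \<in> D" "N * e + d = N * e' + d'"
    have "e = e'" using divmod_lin[OF dN[OF a(2)], of e] divmod_lin[OF dN[OF a(4)], of e'] a(5) by simp
    moreover have "d = d'" using divmod_lin[OF dN[OF a(2)], of e] divmod_lin[OF dN[OF a(4)], of e'] a(5) by simp
    ultimately show "e = e' \<and> d = d'" by simp
  qed
  have img1: "?h ` (D \<times> E) = ?S"
  proof
    show "?h ` (D \<times> E) \<subseteq> ?S"
    proof clarify
      fix d e assume a: "d \<in> D" "e \<in> E"
      have "M * d + e < M * d + M" using eM[OF a(2)] by simp
      also have "\<dots> = M * (d + 1)" by simp
      also have "\<dots> \<le> M * N" using dN[OF a(1)] by (intro mult_left_mono) auto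
      finally have "M * d + e < N * M" by (simp add: mult.commute)
      then show "M * d + e < N * M \<and> (M * d + e) div M \<in> D \<and> (M * d + e) mod M \<in> E"
        using divmod_lin[OF eM[OF a(2)], of d] a by simp
    qed
    show "?S \<subseteq> ?h ` (D \<times> E)"
    proof
      fix k assume k: "k \<in> ?S"
      have "k = ?h (k div M, k mod M)" by simp
      moreover have "(k div M, k mod M) \<in> D \<times> E" using k by simp
      ultimately show "k \<in> ?h ` (D \<times> E)" by blast
    qed
  qed
  have img2: "?h' ` (E \<times> D) = ?S'"
  proof
    show "?h' ` (E \<times> D) \<subseteq> ?S'"
    proof clarify
      fix d e assume a: "e \<in> E" "d \<in> D"
      have "N * e + d < N * e + N" using dN[OF a(2)] by simp
      also have "\<dots> = N * (e + 1)" by simp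
      also have "\<dots> \<le> N * M" using eM[OF a(1)] by (intro mult_left_mono) auto
      finally have "N * e + d < N * M" .
      then show "N * e + d < N * M \<and> (N * e + d) div N \<in> E \<and> (N * e + d) mod N \<in> D"
        using divmod_lin[OF dN[OF a(2)], of e] a by simp
    qed
    show "?S' \<subseteq> ?h' ` (E \<times> D)"
    proof
      fix k assume k: "k \<in> ?S'"
      have "k = ?h' (k div N, k mod N)" by simp
      moreover have "(k div N, k mod N) \<in> E \<times> D" using k by simp
      ultimately show "k \<in> ?h' ` (E \<times> D)" by blast
    qed
  qed
  have "(\<Sum>d\<in>D. \<Sum>e\<in>E. f (M * d + e)) = (\<Sum>x\<in>D \<times> E. f (?h x))"
    by (simp add: sum.cartesian_product case_prod_beta)
  also have "\<dots> = sum f (?h ` (D \<times> E))"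
    by (rule sum.reindex[OF inj1, symmetric, unfolded comp_def])
  also have "\<dots> = sum f (?h' ` (E \<times> D))" using img1 img2 SS by simp
  also have "\<dots> = (\<Sum>x\<in>E \<times> D. f (?h' x))"
    by (rule sum.reindex[OF inj2, unfolded comp_def])
  also have "\<dots> = (\<Sum>e\<in>E. \<Sum>d\<in>D. f (N * e + d))"
    by (simp add: sum.cartesian_product case_prod_beta)
  finally show ?thesis .
qed

lemma main_eq:
  assumes v1: "valid_digits N D" and v2: "valid_digits M E"
    and g1: "good N D H1" and g2: "good M E H2"
    and NK: "N \<le> K" and MK: "M \<le> K"
    and ag1: "\<And>n j. 1 \<le> n \<Longrightarrow> n \<le> K \<Longrightarrow> j \<le> n \<Longrightarrow> H1 (real j / real n) = H2 (real j / real n)"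
    and ag2: "\<And>j. j \<le> K ^ 3 \<Longrightarrow> H1 (real j / real (K ^ 3)) = H2 (real j / real (K ^ 3))"
  shows "H1 = H2"
proof -
  let ?r = "real (card D)" and ?s = "real (card E)"
  let ?L = "N * M"
  have fD: "finite D" and fE: "finite E" and r2: "?r \<ge> 2" and s2: "?s \<ge> 2"
    and N3: "N \<ge> 3" and M3: "M \<ge> 3"
    using valid_facts[OF v1] valid_facts[OF v2] by auto
  have gv1: "H1 (real d / real N) = cnt D d / ?r" if "d \<le> N" for d
    using grid_val[OF v1 g1 that] .
  have gv2: "H2 (real e / real M) = cnt E e / ?s" if "e \<le> M" for e
    using grid_val[OF v2 g2 that] .
  have ag1M: "H1 (real e / real M) = cnt E e / ?s" if "e \<le> M" for e
    using ag1[of M e] that M3 MK gv2[OF that] by simp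
  have ag2N: "H2 (real d / real N) = cnt D d / ?r" if "d \<le> N" for d
    using ag1[of N d] that N3 NK gv1[OF that] by simp
  have Lv1: "H1 (real (d * M + e) / real ?L) =
    (cnt D d + (if d \<in> D then cnt E e / ?s else 0)) / ?r" if "d < N" "e \<le> M" for d e
    by (rule Lval[OF v1 v2 g1 ag1M that])
  have Lv2: "H2 (real (e * N + d) / real (M * N)) =
    (cnt E e + (if e \<in> E then cnt D d / ?r else 0)) / ?s" if "e < M" "d \<le> N" for d e
    by (rule Lval[OF v2 v1 g2 ag2N that])
  have close: "\<bar>H1 x - H2 x\<bar> < 1 / (?r * ?s)" if x: "0 \<le> x" "x \<le> 1" for x
  proof -
    let ?m = "real (K ^ 3)"
    have K3: "K \<ge> 3" using N3 NK by simp
    have m0: "?m > 0" using K3 by simp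
    define i where "i = nat \<lfloor>x * ?m\<rfloor>"
    have fl: "real i \<le> x * ?m" "x * ?m < real i + 1" unfolding i_def using x m0 by auto
    have iK: "i \<le> K ^ 3"
    proof -
      have "x * ?m \<le> ?m" using x m0 by (simp add: mult_left_le_one_le)
      then have "real i \<le> real (K ^ 3)" using fl by linarith
      then show ?thesis by (simp only: of_nat_le_iff)
    qed
    define a where "a = real i / ?m"
    define b where "b = real (i + 1) / ?m"
    have ax: "a \<le> x" and xb: "x \<le> b" using fl m0 by (auto simp: a_def b_def field_simps)
    have ba: "b = a + 1 / ?m" by (simp add: a_def b_def add_divide_distrib)
    have eqa: "H1 a = H2 a" unfolding a_def using ag2[OF iK] by simp
    have eqb: "H1 b = H2 b"
    proof (cases "i + 1 \<le> K ^ 3")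
      case True then show ?thesis unfolding b_def using ag2[OF True] by simp
    next
      case False
      then have "K ^ 3 \<le> i + 1" by simp
      then have "real (K ^ 3) \<le> real (i + 1)" by (simp only: of_nat_le_iff)
      then have "b \<ge> 1" using m0 by (simp add: b_def)
      then show ?thesis using g1 g2 by (simp add: good_def bc_def)
    qed
    have mo1: "H1 u \<le> H1 w" if "u \<le> w" for u w using g1 that by (simp add: good_def mono_def)
    have mo2: "H2 u \<le> H2 w" if "u \<le> w" for u w using g2 that by (simp add: good_def mono_def)
    have absb: "\<bar>H1 x - H2 x\<bar> \<le> H1 b - H1 a"
      using mo1[OF ax] mo1[OF xb] mo2[OF ax] mo2[OF xb] eqa eqb by linarith
    have mN: "1 / ?m \<le> 1 / real N ^ 3"
    proof -
      have "real N ^ 3 \<le> real K ^ 3" using NK by (intro power_mono) auto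
      then show ?thesis using N3 by (simp add: frac_le)
    qed
    have mM: "1 / ?m \<le> 1 / real M ^ 3"
    proof -
      have "real M ^ 3 \<le> real K ^ 3" using MK by (intro power_mono) auto
      then show ?thesis using M3 by (simp add: frac_le)
    qed
    have b1: "H1 b - H1 a \<le> (1 / ?r) ^ 3"
      using incr_bound[OF v1 g1, of "1 / ?m" 3 a] mN m0 ba by simp
    have b2: "H1 b - H1 a \<le> (1 / ?s) ^ 3"
      using incr_bound[OF v2 g2, of "1 / ?m" 3 a] mM m0 ba eqa eqb by simp
    have "min ((1 / ?r) ^ 3) ((1 / ?s) ^ 3) < 1 / (?r * ?s)"
    proof (cases "?r \<le> ?s")
      case True
      have "?r * ?s < ?s * ?s * ?s"
      proof -
        have "?s * 2 \<le> ?s * ?s" using s2 by (intro mult_left_mono) auto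
        then have "?r < ?s * ?s" using True s2 by linarith
        then show ?thesis using s2 by (simp add: mult_strict_right_mono mult.commute mult.left_commute)
      qed
      then have "(1 / ?s) ^ 3 < 1 / (?r * ?s)" using r2 s2
        by (simp add: power3_eq_cube field_simps)
      then show ?thesis by linarith
    next
      case False
      have "?s * ?r < ?r * ?r * ?r"
      proof -
        have "?r * 2 \<le> ?r * ?r" using r2 by (intro mult_left_mono) auto
        then have "?s < ?r * ?r" using False r2 by linarith
        then show ?thesis using r2 by (simp add: mult_strict_right_mono mult.commute mult.left_commute)
      qed
      then have "(1 / ?r) ^ 3 < 1 / (?r * ?s)" using r2 s2
        by (simp add: power3_eq_cube field_simps)
      then show ?thesis by linarith
    qed
    then show ?thesis using absb b1 b2 by linarith
  qed
  have int1: "?r * ?s * H1 (real k / real ?L) \<in> \<int>" if "k \<le> ?L" for k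
  proof (cases "k = ?L")
    case True
    have "H1 1 = 1" using g1 by (simp add: good_def bc_def)
    then show ?thesis using True N3 M3 by simp
  next
    case False
    then have kL: "k < ?L" using that by simp
    define d where "d = k div M"
    define e where "e = k mod M"
    have k: "k = d * M + e" by (simp add: d_def e_def)
    have dN: "d < N" using kL M3 by (simp add: d_def less_mult_imp_div_less mult.commute)
    have eM: "e \<le> M" using M3 by (simp add: e_def less_imp_le)
    have "?r * ?s * H1 (real k / real ?L) = ?s * cnt D d + (if d \<in> D then cnt E e else 0)"
      unfolding k Lv1[OF dN eM] using r2 s2 by (simp add: field_simps)
    then show ?thesis by (simp add: cnt_def)
  qed
  have int2: "?r * ?s * H2 (real k / real ?L) \<in> \<int>" if "k \<le> ?L" for k
  proof (cases "k = ?L")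
    case True
    have "H2 1 = 1" using g2 by (simp add: good_def bc_def)
    then show ?thesis using True N3 M3 by simp
  next
    case False
    then have kL: "k < ?L" using that by simp
    define d where "d = k mod N"
    define e where "e = k div N"
    have k: "k = e * N + d" by (simp add: d_def e_def)
    have kL': "k < M * N" using kL by (simp add: mult.commute)
    have eM: "e < M" unfolding e_def by (rule less_mult_imp_div_less[OF kL'])
    have dN: "d \<le> N" using N3 by (simp add: d_def less_imp_le)
    have LL: "real ?L = real (M * N)" by (simp add: mult.commute)
    have "?r * ?s * H2 (real k / real ?L) = ?r * cnt E e + (if e \<in> E then cnt D d else 0)"
      unfolding LL k Lv2[OF eM dN] using r2 s2 by (simp add: field_simps)
    then show ?thesis by (simp add: cnt_def)
  qed
  have Leq: "H1 (real k / real ?L) = H2 (real k / real ?L)" if "k \<le> ?L" for k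
  proof -
    have kr: "real k \<le> real ?L" using that by (simp only: of_nat_le_iff)
    have L0: "real ?L > 0" using N3 M3 by simp
    have x: "0 \<le> real k / real ?L" "real k / real ?L \<le> 1" using kr L0 by (auto simp: divide_le_eq_1)
    have "?r * ?s * H1 (real k / real ?L) - ?r * ?s * H2 (real k / real ?L) \<in> \<int>"
      using int1[OF that] int2[OF that] by (rule Ints_diff)
    moreover have "\<bar>?r * ?s * H1 (real k / real ?L) - ?r * ?s * H2 (real k / real ?L)\<bar> < 1"
    proof -
      have "\<bar>?r * ?s * H1 (real k / real ?L) - ?r * ?s * H2 (real k / real ?L)\<bar>
          = ?r * ?s * \<bar>H1 (real k / real ?L) - H2 (real k / real ?L)\<bar>"
        using r2 s2 by (simp add: abs_mult right_diff_distrib[symmetric])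
      also have "\<dots> < ?r * ?s * (1 / (?r * ?s))"
        using close[OF x] r2 s2 by (intro mult_strict_left_mono) auto
      also have "\<dots> = 1" using r2 s2 by simp
      finally show ?thesis .
    qed
    ultimately obtain z :: int where z: "?r * ?s * H1 (real k / real ?L) - ?r * ?s * H2 (real k / real ?L) = of_int z"
        "\<bar>(of_int z::real)\<bar> < 1"
      by (metis Ints_cases)
    from z(2) have "z = 0" by (auto simp: abs_less_iff)
    with z(1) have "?r * ?s * H1 (real k / real ?L) - ?r * ?s * H2 (real k / real ?L) = 0" by simp
    then show ?thesis using r2 s2 by simp
  qed
  have incr: "(k div M \<in> D \<and> k mod M \<in> E) \<longleftrightarrow> (k div N \<in> E \<and> k mod N \<in> D)" if kL: "k < ?L" for k
  proof -
    define d where "d = k div M"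
    define e where "e = k mod M"
    have k: "k = d * M + e" by (simp add: d_def e_def)
    have k1: "Suc k = d * M + Suc e" by (simp add: d_def e_def)
    have dN: "d < N" using kL M3 by (simp add: d_def less_mult_imp_div_less mult.commute)
    have eM: "e < M" using M3 by (simp add: e_def)
    have i1: "H1 (real (Suc k) / real ?L) - H1 (real k / real ?L) =
        (if d \<in> D \<and> e \<in> E then 1 else 0) / (?r * ?s)"
    proof -
      have a: "H1 (real (Suc k) / real ?L) = (cnt D d + (if d \<in> D then cnt E (Suc e) / ?s else 0)) / ?r"
        using Lv1[OF dN, of "Suc e"] eM unfolding k1 by simp
      have b: "H1 (real k / real ?L) = (cnt D d + (if d \<in> D then cnt E e / ?s else 0)) / ?r"
        using Lv1[OF dN, of e] eM unfolding k by simp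
      show ?thesis unfolding a b cnt_Suc[OF fE, of e] using r2 s2 by (auto simp: field_simps)
    qed
    define d' where "d' = k mod N"
    define e' where "e' = k div N"
    have k': "k = e' * N + d'" by (simp add: d'_def e'_def)
    have k1': "Suc k = e' * N + Suc d'" by (simp add: d'_def e'_def)
    have kL': "k < M * N" using kL by (simp add: mult.commute)
    have eM': "e' < M" unfolding e'_def by (rule less_mult_imp_div_less[OF kL'])
    have dN': "d' < N" using N3 by (simp add: d'_def)
    have LL: "real ?L = real (M * N)" by (simp add: mult.commute)
    have i2: "H2 (real (Suc k) / real ?L) - H2 (real k / real ?L) =
        (if e' \<in> E \<and> d' \<in> D then 1 else 0) / (?r * ?s)"
    proof -
      have a: "H2 (real (Suc k) / real ?L) = (cnt E e' + (if e' \<in> E then cnt D (Suc d') / ?r else 0)) / ?s"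
        using Lv2[OF eM', of "Suc d'"] dN' unfolding LL k1' by simp
      have b: "H2 (real k / real ?L) = (cnt E e' + (if e' \<in> E then cnt D d' / ?r else 0)) / ?s"
        using Lv2[OF eM', of d'] dN' unfolding LL k' by simp
      show ?thesis unfolding a b cnt_Suc[OF fD, of d'] using r2 s2 by (auto simp: field_simps)
    qed
    have "(if d \<in> D \<and> e \<in> E then 1 else 0) / (?r * ?s) = ((if e' \<in> E \<and> d' \<in> D then 1 else 0) :: real) / (?r * ?s)"
      using i1 i2 Leq[of k] Leq[of "Suc k"] kL by linarith
    then have "(if d \<in> D \<and> e \<in> E then 1 else 0) = ((if e' \<in> E \<and> d' \<in> D then 1 else 0) :: real)"
      using r2 s2 by (simp add: divide_cancel_right)
    then show ?thesis unfolding d_def e_def d'_def e'_def by (auto split: if_splits)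
  qed
  define G where "G = Top N D H2"
  have bm2: "bc H2" "mono H2" using g2 by (auto simp: good_def)
  have fe2: "H2 z = (\<Sum>e\<in>E. H2 (real M * z - real e)) / ?s" for z using g2 unfolding good_def fe_def by blast
  have feG: "fe M E G" unfolding fe_def
  proof
    fix y
    let ?f = "\<lambda>k. H2 (real N * real M * y - real k)"
    have "G y = (\<Sum>d\<in>D. (\<Sum>e\<in>E. H2 (real M * (real N * y - real d) - real e)) / ?s) / ?r"
      unfolding G_def Top_def by (subst fe2) simp
    also have "\<dots> = (\<Sum>d\<in>D. \<Sum>e\<in>E. ?f (M * d + e)) / (?r * ?s)"
      by (simp add: sum_divide_distrib[symmetric] algebra_simps)
    also have "(\<Sum>d\<in>D. \<Sum>e\<in>E. ?f (M * d + e)) = (\<Sum>e\<in>E. \<Sum>d\<in>D. ?f (N * e + d))"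
      by (rule sum_comm[OF fD fE valid_facts(5)[OF v1] valid_facts(5)[OF v2] incr])
    also have "(\<Sum>e\<in>E. \<Sum>d\<in>D. ?f (N * e + d)) / (?r * ?s) =
        (\<Sum>e\<in>E. G (real M * y - real e)) / ?s"
      unfolding G_def Top_def by (simp add: sum_divide_distrib[symmetric] algebra_simps)
    finally show "G y = (\<Sum>e\<in>E. G (real M * y - real e)) / ?s" .
  qed
  have "good M E G" unfolding good_def G_def using feG Top_bc_mono[OF v1 bm2] by (simp add: G_def)
  then have GH: "G = H2" using fe_uniq[OF v2 _ g2] by blast
  have "fe N D H2" unfolding fe_def
  proof
    fix y show "H2 y = (\<Sum>d\<in>D. H2 (real N * y - real d)) / ?r"
      using fun_cong[OF GH, of y] by (simp add: G_def Top_def)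
  qed
  then have "good N D H2" using bm2 by (simp add: good_def)
  then show ?thesis using fe_uniq[OF v1 g1] by blast
qed



definition Pm :: "nat \<Rightarrow> nat set \<Rightarrow> real measure \<Rightarrow> bool" where
  "Pm N D \<mu> \<longleftrightarrow> sets \<mu> = sets borel \<and> prob_space \<mu> \<and>
     (\<forall>A \<in> sets borel. emeasure \<mu> A =
        (\<Sum>d\<in>D. emeasure \<mu> (cphi N d -` A)) / ennreal (real (card D)))"

lemma cphi_meas[measurable]: "cphi N d \<in> borel_measurable borel"
  unfolding cphi_def by measurable

lemma cphi_Iic:
  assumes "N > 0" shows "cphi N d -` {..y} = {..real N * y - real d}"
  using assms by (auto simp: cphi_def field_simps)

lemma Pm_real_distribution:
  assumes "Pm N D \<mu>" shows "real_distribution \<mu>"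
proof -
  interpret prob_space \<mu> using assms by (simp add: Pm_def)
  show ?thesis by unfold_locales (use assms in \<open>simp add: Pm_def\<close>)
qed

lemma Pm_cdf_fe:
  assumes v: "valid_digits N D" and P: "Pm N D \<mu>"
  shows "fe N D (cdf \<mu>)"
  unfolding fe_def
proof
  fix y
  interpret real_distribution \<mu> by (rule Pm_real_distribution[OF P])
  let ?r = "real (card D)"
  have fD: "finite D" and r2: "?r \<ge> 2" and N3: "N \<ge> 3" using valid_facts[OF v] by auto
  have em: "emeasure \<mu> {..z} = ennreal (cdf \<mu> z)" for z
    by (simp add: cdf_def emeasure_eq_measure)
  have "emeasure \<mu> {..y} = (\<Sum>d\<in>D. emeasure \<mu> (cphi N d -` {..y})) / ennreal ?r"
    using P by (simp add: Pm_def)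
  also have "\<dots> = (\<Sum>d\<in>D. ennreal (cdf \<mu> (real N * y - real d))) / ennreal ?r"
    using N3 by (simp add: cphi_Iic em)
  also have "\<dots> = ennreal ((\<Sum>d\<in>D. cdf \<mu> (real N * y - real d)) / ?r)"
    using r2 by (simp add: sum_ennreal cdf_nonneg sum_nonneg divide_ennreal)
  finally have "ennreal (cdf \<mu> y) = ennreal ((\<Sum>d\<in>D. cdf \<mu> (real N * y - real d)) / ?r)"
    using em by simp
  then show "cdf \<mu> y = (\<Sum>d\<in>D. cdf \<mu> (real N * y - real d)) / ?r"
    using r2 by (subst (asm) ennreal_inj) (auto simp: cdf_nonneg sum_nonneg)
qed

lemma fe_bc:
  assumes v: "valid_digits N D" and f: "fe N D F" and m: "mono F"
    and r: "\<And>y. 0 \<le> F y" "\<And>y. F y \<le> 1"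
    and lb: "(F \<longlongrightarrow> 0) at_bot" and lt: "(F \<longlongrightarrow> 1) at_top"
  shows "bc F"
proof -
  let ?r = "real (card D)"
  have fD: "finite D" and r2: "?r \<ge> 2" and N3: "N \<ge> 3" using valid_facts[OF v] by auto
  have dN: "real d \<le> real N - 1" if "d \<in> D" for d using valid_facts(5)[OF v that] by linarith
  have feq: "F z = (\<Sum>d\<in>D. F (real N * z - real d)) / ?r" for z using f unfolding fe_def by blast
  have up: "F z \<le> F (real N * z)" for z
  proof -
    have "(\<Sum>d\<in>D. F (real N * z - real d)) \<le> (\<Sum>d\<in>D. F (real N * z))"
      by (intro sum_mono monoD[OF m]) simp
    then have "(\<Sum>d\<in>D. F (real N * z - real d)) / ?r \<le> (\<Sum>d\<in>D. F (real N * z)) / ?r"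
      by (rule divide_right_mono) (use r2 in auto)
    also have "\<dots> = F (real N * z)" using r2 by simp
    finally show ?thesis using feq[of z] by linarith
  qed
  have down: "F (real N * z - real N + 1) \<le> F z" for z
  proof -
    have "(\<Sum>d\<in>D. F (real N * z - real N + 1)) \<le> (\<Sum>d\<in>D. F (real N * z - real d))"
    proof (intro sum_mono monoD[OF m])
      fix d assume "d \<in> D"
      from dN[OF this] show "real N * z - real N + 1 \<le> real N * z - real d" by linarith
    qed
    then have "(\<Sum>d\<in>D. F (real N * z - real N + 1)) / ?r \<le> (\<Sum>d\<in>D. F (real N * z - real d)) / ?r"
      by (rule divide_right_mono) (use r2 in auto)
    moreover have "(\<Sum>d\<in>D. F (real N * z - real N + 1)) / ?r = F (real N * z - real N + 1)" using r2 by simp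
    ultimately show ?thesis using feq[of z] by linarith
  qed
  have upk: "F y \<le> F (real N ^ k * y)" for k y
  proof (induction k)
    case (Suc k)
    then show ?case using up[of "real N ^ k * y"] by (simp add: mult.assoc)
  qed simp
  have downk: "F (1 + real N ^ k * (y - 1)) \<le> F y" for k y
  proof (induction k)
    case (Suc k)
    have e: "real N * (1 + real N ^ k * (y - 1)) - real N + 1 = 1 + real N ^ Suc k * (y - 1)"
      by (simp add: algebra_simps)
    have "F (1 + real N ^ Suc k * (y - 1)) \<le> F (1 + real N ^ k * (y - 1))"
      using down[of "1 + real N ^ k * (y - 1)"] unfolding e .
    then show ?case using Suc by linarith
  qed simp
  have neg: "F y = 0" if y: "y < 0" for y
  proof (rule ccontr)
    assume "F y \<noteq> 0"
    then have e: "0 < F y" using r(1)[of y] by simp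
    have "\<forall>\<^sub>F z in at_bot. F z < F y" using order_tendstoD(2)[OF lb e] .
    then obtain b where b: "\<And>z. z \<le> b \<Longrightarrow> F z < F y" by (auto simp: eventually_at_bot_linorder)
    obtain k where k: "b / y < real N ^ k" using real_arch_pow[of "real N" "b / y"] N3 by auto
    have "real N ^ k * y \<le> b" using k y by (simp add: divide_less_eq mult.commute)
    then have "F (real N ^ k * y) < F y" by (rule b)
    with upk[of y k] show False by simp
  qed
  have pos: "F y = 1" if y: "y > 1" for y
  proof (rule ccontr)
    assume "F y \<noteq> 1"
    then have e: "F y < 1" using r(2)[of y] by simp
    have "\<forall>\<^sub>F z in at_top. F y < F z" using order_tendstoD(1)[OF lt e] .
    then obtain b where b: "\<And>z. z \<ge> b \<Longrightarrow> F y < F z" by (auto simp: eventually_at_top_linorder)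
    obtain k where k: "(b - 1) / (y - 1) < real N ^ k" using real_arch_pow[of "real N" "(b - 1) / (y - 1)"] N3 by auto
    have "b - 1 \<le> real N ^ k * (y - 1)" using k y by (simp add: divide_less_eq mult.commute)
    then have "F y < F (1 + real N ^ k * (y - 1))" by (intro b) simp
    with downk[of k y] show False by simp
  qed
  have zero: "F 0 = 0"
  proof -
    have e1: "F 0 = (\<Sum>d\<in>D. F (real N * 0 - real d)) / ?r" by (rule feq)
    have "(\<Sum>d\<in>D. F (real N * 0 - real d)) = (\<Sum>d\<in>D. if d = 0 then F 0 else 0)"
      by (rule sum.cong) (auto intro!: neg)
    also have "\<dots> = (if 0 \<in> D then F 0 else 0)" using fD by (simp add: sum.delta)
    finally have e2: "(\<Sum>d\<in>D. F (real N * 0 - real d)) = (if 0 \<in> D then F 0 else 0)" .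
    have "F 0 = (if 0 \<in> D then F 0 else 0) / ?r" using e1 unfolding e2 .
    then have "F 0 \<le> F 0 / ?r" using r(1)[of 0] r2 by (auto split: if_splits)
    then have "F 0 * ?r \<le> F 0" using r2 by (simp add: le_divide_eq)
    then have "F 0 * (?r - 1) \<le> 0" by (simp add: algebra_simps)
    then have "F 0 \<le> 0" using r2 by (auto simp: mult_le_0_iff)
    then show ?thesis using r(1)[of 0] by simp
  qed
  have one: "F 1 = 1"
  proof -
    have "(\<Sum>d\<in>D. 1 - F (real N * 1 - real d)) = (\<Sum>d\<in>D. if d = N - 1 then 1 - F 1 else 0)"
    proof (rule sum.cong)
      fix d assume d: "d \<in> D"
      show "1 - F (real N * 1 - real d) = (if d = N - 1 then 1 - F 1 else 0)"
      proof (cases "d = N - 1")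
        case True then show ?thesis using N3 by (simp add: of_nat_diff)
      next
        case False
        then have "real d \<le> real N - 2" using valid_facts(5)[OF v d] by linarith
        then have "real N * 1 - real d > 1" by simp
        then show ?thesis using pos False by simp
      qed
    qed simp
    also have "\<dots> = (if N - 1 \<in> D then 1 - F 1 else 0)" using fD by (simp add: sum.delta)
    finally have s: "(\<Sum>d\<in>D. 1 - F (real N * 1 - real d)) = (if N - 1 \<in> D then 1 - F 1 else 0)" .
    have e1: "F 1 = (\<Sum>d\<in>D. F (real N * 1 - real d)) / ?r" by (rule feq)
    have "(\<Sum>d\<in>D. 1 - F (real N * 1 - real d)) = ?r - (\<Sum>d\<in>D. F (real N * 1 - real d))"
      by (simp add: sum_subtractf)
    then have "(\<Sum>d\<in>D. F (real N * 1 - real d)) = ?r - (if N - 1 \<in> D then 1 - F 1 else 0)"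
      using s by linarith
    then have "F 1 = (?r - (if N - 1 \<in> D then 1 - F 1 else 0)) / ?r" using e1 by simp
    then have "1 - F 1 = (if N - 1 \<in> D then 1 - F 1 else 0) / ?r" using r2 by (simp add: field_simps)
    then have "1 - F 1 \<le> (1 - F 1) / ?r" using r(2)[of 1] r2 by (auto split: if_splits)
    then have "(1 - F 1) * ?r \<le> 1 - F 1" using r2 by (simp add: le_divide_eq)
    then have "(1 - F 1) * (?r - 1) \<le> 0" by (simp add: algebra_simps)
    then have "1 - F 1 \<le> 0" using r2 by (auto simp: mult_le_0_iff)
    then show ?thesis using r(2)[of 1] by simp
  qed
  show ?thesis unfolding bc_def
  proof (intro conjI allI impI)
    fix y :: real assume "y \<le> 0" then show "F y = 0" using neg zero by (cases "y = 0") auto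
  next
    fix y :: real assume "1 \<le> y" then show "F y = 1" using pos one by (cases "y = 1") auto
  qed
qed



lemma cantor_identify:
  assumes v: "valid_digits N D"
  shows "\<exists>H. good N D H \<and> (\<forall>x\<ge>0. cantor_cdf N D x = H x)"
proof -
  obtain H where g: "good N D H" using exists_good[OF v] by blast
  have fD: "finite D" and D0: "D \<noteq> {}" and r2: "real (card D) \<ge> 2" and N3: "N \<ge> 3"
    using valid_facts[OF v] by auto
  have mo: "H x \<le> H y" if "x \<le> y" for x y using g that by (simp add: good_def mono_def)
  have rc: "continuous (at_right a) H" for a by (rule good_cont_right[OF v g])
  have lb: "(H \<longlongrightarrow> 0) at_bot"
  proof (rule tendsto_eventually)
    show "\<forall>\<^sub>F x in at_bot. H x = 0" unfolding eventually_at_bot_linorder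
      using g by (intro exI[of _ 0]) (auto simp: good_def bc_def)
  qed
  have lt: "(H \<longlongrightarrow> 1) at_top"
  proof (rule tendsto_eventually)
    show "\<forall>\<^sub>F x in at_top. H x = 1" unfolding eventually_at_top_linorder
      using g by (intro exI[of _ 1]) (auto simp: good_def bc_def)
  qed
  define \<mu>0 where "\<mu>0 = interval_measure H"
  have rd: "real_distribution \<mu>0" unfolding \<mu>0_def
    by (rule real_distribution_interval_measure[OF mo rc lb lt])
  have cdf0: "cdf \<mu>0 = H" unfolding \<mu>0_def by (rule cdf_interval_measure[OF mo rc lb])
  interpret R0: real_distribution \<mu>0 by (rule rd)
  have Iic0: "emeasure \<mu>0 {..z} = ennreal (H z)" for z
    unfolding \<mu>0_def by (rule emeasure_interval_measure_Iic[OF mo rc lb])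
  define B where "B = (\<lambda>d. distr \<mu>0 borel (cphi N d))"
  define \<nu> where "\<nu> = measure_pmf (pmf_of_set D) \<bind> B"
  have A_in: "measure_pmf (pmf_of_set D) \<in> space (prob_algebra (count_space UNIV))"
    by (simp add: space_prob_algebra measure_pmf.prob_space_axioms)
  have cm: "cphi N d \<in> \<mu>0 \<rightarrow>\<^sub>M borel" for d
    by (subst measurable_cong_sets[OF R0.events_eq_borel refl]) simp
  have B_m: "B \<in> count_space UNIV \<rightarrow>\<^sub>M prob_algebra borel"
    unfolding measurable_count_space_eq1
    by (auto simp: B_def space_prob_algebra intro!: R0.prob_space_distr cm)
  have pn: "prob_space \<nu>" unfolding \<nu>_def by (rule prob_space_bind'[OF A_in B_m])
  have sn: "sets \<nu> = sets borel" unfolding \<nu>_def by (rule sets_bind'[OF A_in B_m])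
  have emn: "emeasure \<nu> A = (\<Sum>d\<in>D. emeasure \<mu>0 (cphi N d -` A)) / of_nat (card D)"
    if A: "A \<in> sets borel" for A
  proof -
    have "emeasure \<nu> A = (\<integral>\<^sup>+d. emeasure (B d) A \<partial>measure_pmf (pmf_of_set D))"
      unfolding \<nu>_def by (rule emeasure_bind_prob_algebra[OF A_in B_m A])
    also have "\<dots> = (\<Sum>d\<in>D. emeasure (B d) A) / of_nat (card D)"
      by (rule nn_integral_pmf_of_set[OF D0 fD])
    also have "(\<Sum>d\<in>D. emeasure (B d) A) = (\<Sum>d\<in>D. emeasure \<mu>0 (cphi N d -` A))"
      by (intro sum.cong refl) (simp add: B_def emeasure_distr[OF cm A])
    finally show ?thesis .
  qed
  have RNd: "real_distribution \<nu>" unfolding real_distribution_def real_distribution_axioms_def using pn sn by simp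
  interpret RN: real_distribution \<nu> by (rule RNd)
  have cdfn: "cdf \<nu> = H"
  proof
    fix y
    have "emeasure \<nu> {..y} = (\<Sum>d\<in>D. emeasure \<mu>0 (cphi N d -` {..y})) / of_nat (card D)"
      by (rule emn) simp
    also have "\<dots> = (\<Sum>d\<in>D. ennreal (H (real N * y - real d))) / ennreal (real (card D))"
      using N3 by (simp add: cphi_Iic Iic0 ennreal_of_nat_eq_real_of_nat)
    also have "\<dots> = ennreal ((\<Sum>d\<in>D. H (real N * y - real d)) / real (card D))"
      using r2 good_range[OF g] by (simp add: sum_ennreal sum_nonneg divide_ennreal)
    also have "(\<Sum>d\<in>D. H (real N * y - real d)) / real (card D) = H y"
      using g unfolding good_def fe_def by metis
    finally have "ennreal (measure \<nu> {..y}) = ennreal (H y)" by (simp add: RN.emeasure_eq_measure)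
    then show "cdf \<nu> y = H y" using good_range[OF g, of y]
      by (simp add: cdf_def ennreal_inj)
  qed
  have nu_eq: "\<nu> = \<mu>0" by (rule cdf_unique[OF RN.real_distribution_axioms rd]) (simp add: cdfn cdf0)
  have P0: "Pm N D \<mu>0"
    unfolding Pm_def
  proof (intro conjI ballI)
    show "sets \<mu>0 = sets borel" by simp
    show "prob_space \<mu>0" by (rule R0.prob_space_axioms)
    fix A :: "real set" assume A: "A \<in> sets borel"
    show "emeasure \<mu>0 A = (\<Sum>d\<in>D. emeasure \<mu>0 (cphi N d -` A)) / ennreal (real (card D))"
      using emn[OF A] unfolding nu_eq by (simp add: ennreal_of_nat_eq_real_of_nat)
  qed
  have uniq: "\<mu> = \<mu>0" if P: "Pm N D \<mu>" for \<mu>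
  proof -
    interpret R: real_distribution \<mu> by (rule Pm_real_distribution[OF P])
    have "bc (cdf \<mu>)"
      by (rule fe_bc[OF v Pm_cdf_fe[OF v P]])
         (auto simp: mono_def R.cdf_nondecreasing R.cdf_nonneg R.cdf_bounded_prob R.cdf_lim_at_bot R.cdf_lim_at_top_prob)
    then have "good N D (cdf \<mu>)"
      using Pm_cdf_fe[OF v P] by (auto simp: good_def mono_def R.cdf_nondecreasing)
    then have "cdf \<mu> = H" using fe_uniq[OF v _ g] by blast
    then show ?thesis using cdf_unique[OF R.real_distribution_axioms rd] cdf0 by simp
  qed
  have cm_eq: "cantor_measure N D = \<mu>0"
  proof -
    have "cantor_measure N D = (THE \<mu>. Pm N D \<mu>)" by (simp add: cantor_measure_def Pm_def)
    also have "\<dots> = \<mu>0" 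
    proof (rule the_equality)
      show "Pm N D \<mu>0" by (rule P0)
    next
      fix \<mu> assume "Pm N D \<mu>" then show "\<mu> = \<mu>0" by (rule uniq)
    qed
    finally show ?thesis .
  qed
  have "cantor_cdf N D x = H x" if x: "x \<ge> 0" for x
  proof -
    have m: "measure \<mu>0 {..z} = H z" for z using fun_cong[OF cdf0, of z] by (simp add: cdf_def)
    have "{0..x} = {..x} - {..<0}" using x by auto
    moreover have s1: "{..x} \<in> sets \<mu>0" by simp
    moreover have s2: "{..<0} \<in> sets \<mu>0" by simp
    moreover have s3: "{..<0} \<subseteq> {..x}" using x by auto
    ultimately have "measure \<mu>0 {0..x} = measure \<mu>0 {..x} - measure \<mu>0 {..<0}"
      using R0.finite_measure_Diff[OF s1 s2 s3] by simp
    moreover have "measure \<mu>0 {..<0} \<le> measure \<mu>0 {..0}" by (rule R0.finite_measure_mono) auto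
    moreover have "H 0 = 0" using g by (simp add: good_def bc_def)
    moreover have "measure \<mu>0 {..<0} \<ge> 0" by (rule measure_nonneg)
    ultimately have "measure \<mu>0 {0..x} = H x" using m[of x] m[of 0] by linarith
    then show ?thesis by (simp add: cantor_cdf_def cm_eq)
  qed
  then show ?thesis using g by blast
qed



definition Mk :: "nat \<Rightarrow> nat" where "Mk K = (K + 1) ^ 2 + (K ^ 3 + 1)"

definition fr :: "nat \<Rightarrow> nat \<Rightarrow> real" where
  "fr a b = (if 0 < a \<and> a < b then real a / real b else 1 / 2)"

lemma fr_in: "fr a b \<in> {0<..<1}"
  unfolding fr_def by (auto simp: field_simps)

definition xk :: "nat \<Rightarrow> nat \<Rightarrow> real" where
  "xk K i = (if i < (K + 1) ^ 2 then fr (i mod (K + 1)) (i div (K + 1)) else fr (i - (K + 1) ^ 2) (K ^ 3))"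

lemma xk_in: "xk K i \<in> {0<..<1}"
  unfolding xk_def using fr_in by simp

lemma Mk_bigo: "(\<lambda>K. real (Mk K)) \<in> O(\<lambda>K. real K ^ 3)"
proof (rule bigoI[where c = 6])
  show "\<forall>\<^sub>F K in at_top. norm (real (Mk K)) \<le> 6 * norm (real K ^ 3)"
    unfolding eventually_at_top_linorder
  proof (intro exI[of _ 1] allI impI)
    fix K :: nat assume K: "K \<ge> 1"
    have a: "(K + 1) ^ 2 \<le> 4 * K ^ 3"
    proof -
      have "(K + 1) ^ 2 \<le> (2 * K) ^ 2" using K by (intro power_mono) auto
      also have "\<dots> = 4 * K ^ 2" by (simp add: power_mult_distrib)
      also have "\<dots> \<le> 4 * K ^ 3" using K by (intro mult_left_mono power_increasing) auto
      finally show ?thesis .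
    qed
    have b: "1 \<le> K ^ 3" using K by simp
    have "Mk K \<le> 6 * K ^ 3" using a b by (simp add: Mk_def)
    then have "real (Mk K) \<le> real (6 * K ^ 3)" by (simp only: of_nat_le_iff)
    then show "norm (real (Mk K)) \<le> 6 * norm (real K ^ 3)" by simp
  qed
qed

theorem theorem2p5:
  shows "\<exists>M :: nat \<Rightarrow> nat.
     (\<lambda>K. real (M K)) \<in> O(\<lambda>K. real K ^ 3) \<and>
     (\<forall>K \<ge> 3. M K > 0 \<and>
        (\<exists>x :: nat \<Rightarrow> real. (\<forall>i < M K. x i \<in> {0<..<1}) \<and>
           (\<forall>F \<in> cantor_class K. \<forall>G \<in> cantor_class K.
              (\<forall>i < M K. F (x i) = G (x i)) \<longrightarrow> (\<forall>t \<in> {0..1}. F t = G t))))"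
proof (intro exI[of _ Mk] conjI allI impI)
  show "(\<lambda>K. real (Mk K)) \<in> O(\<lambda>K. real K ^ 3)" by (rule Mk_bigo)
  fix K :: nat assume K3: "3 \<le> K"
  show "Mk K > 0" by (simp add: Mk_def)
  show "\<exists>x :: nat \<Rightarrow> real. (\<forall>i < Mk K. x i \<in> {0<..<1}) \<and>
           (\<forall>F \<in> cantor_class K. \<forall>G \<in> cantor_class K.
              (\<forall>i < Mk K. F (x i) = G (x i)) \<longrightarrow> (\<forall>t \<in> {0..1}. F t = G t))"
  proof (intro exI[of _ "xk K"] conjI ballI impI allI)
    fix i show "xk K i \<in> {0<..<1}" by (rule xk_in)
  next
    fix F G :: "real \<Rightarrow> real" and t :: real
    assume F: "F \<in> cantor_class K" and G: "G \<in> cantor_class K"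
      and ag: "\<forall>i<Mk K. F (xk K i) = G (xk K i)" and t: "t \<in> {0..1}"
    obtain N D where v1: "valid_digits N D" and NK: "N \<le> K" and Fd: "F = cantor_cdf N D"
      using F by (auto simp: cantor_class_def)
    obtain M E where v2: "valid_digits M E" and MK: "M \<le> K" and Gd: "G = cantor_cdf M E"
      using G by (auto simp: cantor_class_def)
    obtain H1 where g1: "good N D H1" and h1: "\<And>x. x \<ge> 0 \<Longrightarrow> cantor_cdf N D x = H1 x"
      using cantor_identify[OF v1] by blast
    obtain H2 where g2: "good M E H2" and h2: "\<And>x. x \<ge> 0 \<Longrightarrow> cantor_cdf M E x = H2 x"
      using cantor_identify[OF v2] by blast
    have agH: "H1 (xk K i) = H2 (xk K i)" if "i < Mk K" for i
    proof -
      have "xk K i \<ge> 0" using xk_in[of K i] by simp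
      then show ?thesis using ag that h1 h2 Fd Gd by metis
    qed
    have b1: "H1 0 = 0" "H1 1 = 1" using g1 by (auto simp: good_def bc_def)
    have b2: "H2 0 = 0" "H2 1 = 1" using g2 by (auto simp: good_def bc_def)
    have ag1: "H1 (real j / real n) = H2 (real j / real n)" if n: "1 \<le> n" "n \<le> K" and j: "j \<le> n" for n j
    proof (cases "j = 0")
      case True then show ?thesis using b1 b2 by simp
    next
      case False
      show ?thesis
      proof (cases "j = n")
        case True then show ?thesis using b1 b2 n by simp
      next
        case False2: False
        define i where "i = (K + 1) * n + j"
        have jK: "j < K + 1" using j n by simp
        have im: "i mod (K + 1) = j" "i div (K + 1) = n" using divmod_lin[OF jK, of n] by (simp_all add: i_def)
        have "i < (K + 1) ^ 2"
        proof -
          have "i < n * (K + 1) + (K + 1)" using jK by (simp add: i_def mult.commute)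
          also have "\<dots> = (n + 1) * (K + 1)" by simp
          also have "\<dots> \<le> (K + 1) * (K + 1)" using n by (intro mult_right_mono) auto
          finally show ?thesis by (simp add: power2_eq_square)
        qed
        moreover have "0 < j" "j < n" using False False2 j by auto
        moreover have "xk K i = fr j n"
          by (simp only: xk_def if_P[OF \<open>i < (K + 1) ^ 2\<close>] im)
        ultimately have "xk K i = real j / real n" by (simp add: fr_def)
        moreover have "i < Mk K" using \<open>i < (K + 1) ^ 2\<close> by (simp add: Mk_def)
        ultimately show ?thesis using agH by metis
      qed
    qed
    have ag2: "H1 (real j / real (K ^ 3)) = H2 (real j / real (K ^ 3))" if j: "j \<le> K ^ 3" for j
    proof (cases "j = 0")
      case True then show ?thesis using b1 b2 by simp
    next
      case False
      show ?thesis
      proof (cases "j = K ^ 3")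
        case True
        have "real (K ^ 3) \<noteq> 0" using K3 by simp
        then show ?thesis using b1 b2 True by simp
      next
        case False2: False
        define i where "i = (K + 1) ^ 2 + j"
        have "xk K i = real j / real (K ^ 3)" using False False2 j by (simp add: xk_def i_def fr_def)
        moreover have "i < Mk K" using j by (simp add: Mk_def i_def)
        ultimately show ?thesis using agH by metis
      qed
    qed
    have "H1 = H2" by (rule main_eq[OF v1 v2 g1 g2 NK MK ag1 ag2])
    moreover have "t \<ge> 0" using t by simp
    ultimately show "F t = G t" using h1 h2 Fd Gd by simp
  qed
qed


end
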